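(* Let $\alpha$ be an $E$-semigroup on $B(\mathcal H)$ and let $\beta,\gamma\in\mathrm{Sub}(\alpha)$. Then $\gamma\le\beta$ if and only if $\gamma_t(I)\le\beta_t(I)$ for all $t\ge0$.
   Context: An $E$-semigroup on $B(\mathcal H)$ is a family $(\alpha_t)_{t\ge0}$ of normal ${}^*$-endomorphisms with $\alpha_0=\mathrm{id}$, $\alpha_{s+t}=\alpha_s\alpha_t$, and $t\mapsto\alpha_t(S)$ weak-operator continuous. For $E$-semigroups, $\beta\le\alpha$ means $\alpha_t-\beta_t$ is completely positive for all $t$. $\mathrm{Sub}(\alpha)$ is the set of $E$-semigroups $\beta$ with $\beta\le\alpha$. *)

theory Defs
  imports "HOL-Analysis.Analysis"
begin

text \<open>HOL-Analysis has no complex inner product spaces, so we introduce a type class of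
complex Hilbert spaces: a real Banach space with a compatible complex scalar
multiplication and a complex inner product (linear in the second argument)
inducing the norm.\<close>

class chilbert = real_normed_vector + complete_space +
  fixes scaleC :: "complex \<Rightarrow> 'a \<Rightarrow> 'a" (infixr "*\<^sub>C" 75)
    and cinner :: "'a \<Rightarrow> 'a \<Rightarrow> complex"
  assumes scaleC_of_real: "scaleC (complex_of_real r) x = scaleR r x"
    and scaleC_add_left: "scaleC (a + b) x = scaleC a x + scaleC b x"
    and scaleC_add_right: "scaleC a (x + y) = scaleC a x + scaleC a y"
    and scaleC_scaleC: "scaleC a (scaleC b x) = scaleC (a * b) x"
    and scaleC_one: "scaleC 1 x = x"
    and cinner_conj: "cinner x y = cnj (cinner y x)"
    and cinner_add_right: "cinner x (y + z) = cinner x y + cinner x z"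
    and cinner_scaleC_right: "cinner x (scaleC a y) = a * cinner x y"
    and norm_cinner: "norm x = sqrt (Re (cinner x x))"

definition bop :: "('a::chilbert \<Rightarrow> 'a) \<Rightarrow> bool" where
  "bop T \<longleftrightarrow> bounded_linear T \<and> (\<forall>c x. T (c *\<^sub>C x) = c *\<^sub>C T x)"

definition BH :: "('a::chilbert \<Rightarrow> 'a) set" where
  "BH = {T. bop T}"

definition adjoint_pair :: "('a::chilbert \<Rightarrow> 'a) \<Rightarrow> ('a \<Rightarrow> 'a) \<Rightarrow> bool" where
  "adjoint_pair S T \<longleftrightarrow> (\<forall>x y. cinner (T x) y = cinner x (S y))"

definition selfadj :: "('a::chilbert \<Rightarrow> 'a) \<Rightarrow> bool" where
  "selfadj T \<longleftrightarrow> T \<in> BH \<and> adjoint_pair T T"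

definition posop :: "('a::chilbert \<Rightarrow> 'a) \<Rightarrow> bool" where
  "posop T \<longleftrightarrow> (\<forall>x. Im (cinner x (T x)) = 0 \<and> 0 \<le> Re (cinner x (T x)))"

definition ople :: "('a::chilbert \<Rightarrow> 'a) \<Rightarrow> ('a \<Rightarrow> 'a) \<Rightarrow> bool" where
  "ople A B \<longleftrightarrow> posop (\<lambda>x. B x - A x)"

type_synonym 'a opmap = "('a \<Rightarrow> 'a) \<Rightarrow> ('a \<Rightarrow> 'a)"

text \<open>An operator matrix \<open>[T i j]_{i,j<n}\<close> in \<open>M_n(B(H))\<close> is positive iff
  \<open>\<Sum>i j. \<langle>x_i, T_ij x_j\<rangle> \<ge> 0\<close> for all \<open>x_0,\<dots>,x_{n-1} \<in> H\<close>.\<close>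
definition matpos :: "nat \<Rightarrow> (nat \<Rightarrow> nat \<Rightarrow> ('a::chilbert \<Rightarrow> 'a)) \<Rightarrow> bool" where
  "matpos n T \<longleftrightarrow> (\<forall>x :: nat \<Rightarrow> 'a.
      Im (\<Sum>i<n. \<Sum>j<n. cinner (x i) (T i j (x j))) = 0 \<and>
      0 \<le> Re (\<Sum>i<n. \<Sum>j<n. cinner (x i) (T i j (x j))))"

text \<open>Complete positivity of a map \<open>\<phi>\<close> on B(H): every amplification
  \<open>\<phi>\<^sub>n = id \<otimes> \<phi>\<close> on \<open>M_n(B(H))\<close> is positive.\<close>
definition completely_positive :: "'a::chilbert opmap \<Rightarrow> bool" where
  "completely_positive \<phi> \<longleftrightarrow>
     (\<forall>n T. (\<forall>i<n. \<forall>j<n. T i j \<in> BH) \<longrightarrow> matpos n T \<longrightarrow> matpos n (\<lambda>i j. \<phi> (T i j)))"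

definition star_endo :: "'a::chilbert opmap \<Rightarrow> bool" where
  "star_endo \<phi> \<longleftrightarrow>
     (\<forall>S\<in>BH. \<phi> S \<in> BH) \<and>
     (\<forall>S\<in>BH. \<forall>T\<in>BH. \<phi> (\<lambda>x. S x + T x) = (\<lambda>x. \<phi> S x + \<phi> T x)) \<and>
     (\<forall>S\<in>BH. \<forall>c. \<phi> (\<lambda>x. c *\<^sub>C S x) = (\<lambda>x. c *\<^sub>C \<phi> S x)) \<and>
     (\<forall>S\<in>BH. \<forall>T\<in>BH. \<phi> (S \<circ> T) = \<phi> S \<circ> \<phi> T) \<and>
     (\<forall>S\<in>BH. \<forall>T\<in>BH. adjoint_pair S T \<longrightarrow> adjoint_pair (\<phi> S) (\<phi> T))"

definition is_lub_sa :: "('a::chilbert \<Rightarrow> 'a) set \<Rightarrow> ('a \<Rightarrow> 'a) \<Rightarrow> bool" where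
  "is_lub_sa D L \<longleftrightarrow> selfadj L \<and> (\<forall>d\<in>D. ople d L) \<and>
     (\<forall>U. selfadj U \<longrightarrow> (\<forall>d\<in>D. ople d U) \<longrightarrow> ople L U)"

text \<open>Normality (order continuity): \<open>\<phi>\<close> preserves suprema of bounded increasing
  nets (nonempty upward-directed sets) of self-adjoint operators.\<close>
definition normal_map :: "'a::chilbert opmap \<Rightarrow> bool" where
  "normal_map \<phi> \<longleftrightarrow>
     (\<forall>D L. D \<noteq> {} \<longrightarrow> (\<forall>d\<in>D. selfadj d) \<longrightarrow>
        (\<forall>a\<in>D. \<forall>b\<in>D. \<exists>c\<in>D. ople a c \<and> ople b c) \<longrightarrow>
        is_lub_sa D L \<longrightarrow> is_lub_sa (\<phi> ` D) (\<phi> L))"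

definition E_semigroup :: "(real \<Rightarrow> 'a::chilbert opmap) \<Rightarrow> bool" where
  "E_semigroup \<alpha> \<longleftrightarrow>
     (\<forall>t\<ge>0. star_endo (\<alpha> t) \<and> normal_map (\<alpha> t)) \<and>
     (\<forall>S\<in>BH. \<alpha> 0 S = S) \<and>
     (\<forall>s\<ge>0. \<forall>t\<ge>0. \<forall>S\<in>BH. \<alpha> (s + t) S = \<alpha> s (\<alpha> t S)) \<and>
     (\<forall>S\<in>BH. \<forall>x y. continuous_on {0..} (\<lambda>t. cinner (\<alpha> t S x) y))"

definition sub_le :: "(real \<Rightarrow> 'a::chilbert opmap) \<Rightarrow> (real \<Rightarrow> 'a opmap) \<Rightarrow> bool" where
  "sub_le \<beta> \<alpha> \<longleftrightarrow> (\<forall>t\<ge>0. completely_positive (\<lambda>S x. \<alpha> t S x - \<beta> t S x))"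

definition Sub :: "(real \<Rightarrow> 'a::chilbert opmap) \<Rightarrow> (real \<Rightarrow> 'a opmap) set" where
  "Sub \<alpha> = {\<beta>. E_semigroup \<beta> \<and> sub_le \<beta> \<alpha>}"

end

theory Submission
  imports Defs
begin

lemma cinner_add_left: "cinner (x + y) z = cinner x z + cinner y z"
  by (metis cinner_conj cinner_add_right complex_cnj_add)

lemma cinner_scaleC_left: "cinner (c *\<^sub>C x) y = cnj c * cinner x y"
  by (metis cinner_conj cinner_scaleC_right complex_cnj_mult)

lemma cinner_zero_right[simp]: "cinner x 0 = 0"
  using cinner_add_right[of x 0 0] by simp

lemma cinner_zero_left[simp]: "cinner 0 x = 0"
  by (metis cinner_conj cinner_zero_right complex_cnj_zero)

lemma cinner_diff_right: "cinner x (y - z) = cinner x y - cinner x z"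
  using cinner_add_right[of x "y - z" z] by simp

lemma cinner_minus_right: "cinner x (- y) = - cinner x y"
  using cinner_diff_right[of x 0 y] by simp

lemma cinner_diff_left: "cinner (x - y) z = cinner x z - cinner y z"
  using cinner_add_left[of "x - y" y z] by simp

lemma cinner_self_Im: "Im (cinner x x) = 0"
proof -
  have "Im (cinner x x) = Im (cnj (cinner x x))" by (metis cinner_conj)
  thus ?thesis by simp
qed

lemma cinner_self_Re_ge: "0 \<le> Re (cinner x x)"
proof (rule ccontr)
  assume "\<not> ?thesis"
  then have "sqrt (Re (cinner x x)) < 0" by simp
  with norm_cinner[of x] show False by (metis norm_ge_zero not_le)
qed

lemma cinner_self_norm: "Re (cinner x x) = (norm x)^2"
  using norm_cinner[of x] cinner_self_Re_ge[of x] by simp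

lemma cinner_self_zero: "cinner x x = 0 \<Longrightarrow> x = 0"
  using cinner_self_norm[of x] by simp

lemma cinner_ext_right: "(\<And>u. cinner u y = cinner u z) \<Longrightarrow> y = z"
proof -
  assume h: "\<And>u. cinner u y = cinner u z"
  have "cinner (y - z) (y - z) = 0" using h[of "y-z"] by (simp add: cinner_diff_right)
  thus "y = z" using cinner_self_zero by fastforce
qed

lemma cinner_ext_left: "(\<And>u. cinner y u = cinner z u) \<Longrightarrow> y = z"
  by (metis cinner_conj cinner_ext_right)

lemma scaleC_diff_right: "c *\<^sub>C (x - y) = c *\<^sub>C x - c *\<^sub>C (y::'a::chilbert)"
  using scaleC_add_right[of c "x-y" y] by simp

lemma BH_iff: "T \<in> BH \<longleftrightarrow> bounded_linear T \<and> (\<forall>c x. T (c *\<^sub>C x) = c *\<^sub>C T x)"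
  by (simp add: BH_def bop_def)

lemma BH_add: "T \<in> BH \<Longrightarrow> T (x + y) = T x + T y"
  using BH_iff bounded_linear.linear linear_add by blast

lemma BH_diff: "T \<in> BH \<Longrightarrow> T (x - y) = T x - T y"
  using BH_iff bounded_linear.linear linear_diff by blast

lemma BH_zero: "T \<in> BH \<Longrightarrow> T 0 = 0"
  using BH_iff bounded_linear.linear linear_0 by blast

lemma BH_scale: "T \<in> BH \<Longrightarrow> T (c *\<^sub>C x) = c *\<^sub>C T x"
  using BH_iff by blast

lemma id_BH: "id \<in> BH"
  by (simp add: BH_iff bounded_linear_ident[unfolded id_def[symmetric]])

lemma comp_BH: "S \<in> BH \<Longrightarrow> T \<in> BH \<Longrightarrow> S \<circ> T \<in> BH"
  unfolding BH_iff using bounded_linear_compose[of S T] by (simp add: o_def)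

lemma diff_BH: "S \<in> BH \<Longrightarrow> T \<in> BH \<Longrightarrow> (\<lambda>x. S x - T x) \<in> BH"
  unfolding BH_iff using bounded_linear_sub[of S T] by (simp add: scaleC_diff_right)

lemma adj_id: "adjoint_pair id id" by (simp add: adjoint_pair_def)

lemma adj_sym: "adjoint_pair S T \<Longrightarrow> adjoint_pair T S"
  unfolding adjoint_pair_def by (metis cinner_conj)

lemma se_BH: "star_endo \<phi> \<Longrightarrow> S \<in> BH \<Longrightarrow> \<phi> S \<in> BH"
  by (simp add: star_endo_def)

lemma se_comp: "star_endo \<phi> \<Longrightarrow> S \<in> BH \<Longrightarrow> T \<in> BH \<Longrightarrow> \<phi> (S \<circ> T) = \<phi> S \<circ> \<phi> T"
  by (simp add: star_endo_def)

lemma se_adj: "star_endo \<phi> \<Longrightarrow> S \<in> BH \<Longrightarrow> T \<in> BH \<Longrightarrow> adjoint_pair S T \<Longrightarrow> adjoint_pair (\<phi> S) (\<phi> T)"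
  by (simp add: star_endo_def)

lemma se_idem: "star_endo \<phi> \<Longrightarrow> \<phi> id (\<phi> id x) = \<phi> id x"
  using se_comp[of \<phi> id id] id_BH by (metis comp_apply id_comp)

lemma se_left: "star_endo \<phi> \<Longrightarrow> S \<in> BH \<Longrightarrow> \<phi> id (\<phi> S x) = \<phi> S x"
  using se_comp[of \<phi> id S] id_BH by (metis comp_apply id_comp)

lemma se_right: "star_endo \<phi> \<Longrightarrow> S \<in> BH \<Longrightarrow> \<phi> S (\<phi> id x) = \<phi> S x"
  using se_comp[of \<phi> S id] id_BH by (metis comp_apply comp_id)

lemma se_sa: "star_endo \<phi> \<Longrightarrow> cinner (\<phi> id x) y = cinner x (\<phi> id y)"
  using se_adj[of \<phi> id id] id_BH adj_id unfolding adjoint_pair_def by blast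

lemma cp_pos1:
  assumes "completely_positive \<phi>"
  shows "Im (cinner v (\<phi> id v)) = 0 \<and> 0 \<le> Re (cinner v (\<phi> id v))"
proof -
  have "matpos 1 (\<lambda>i j. (id :: 'a \<Rightarrow> 'a))"
    unfolding matpos_def by (simp add: cinner_self_Im cinner_self_Re_ge)
  then have "matpos 1 (\<lambda>i j. \<phi> id)"
    using assms[unfolded completely_positive_def, rule_format, of 1 "\<lambda>i j. id"] id_BH by simp
  then have "Im (\<Sum>i<(1::nat). \<Sum>j<(1::nat). cinner v (\<phi> id v)) = 0 \<and> 0 \<le> Re (\<Sum>i<(1::nat). \<Sum>j<(1::nat). cinner v (\<phi> id v))"
    unfolding matpos_def by (erule_tac x="\<lambda>_. v" in allE) assumption
  then show ?thesis by (simp add: lessThan_Suc)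
qed

lemma delta2:
  fixes i j n :: nat
  assumes "i < n" "j < n" "\<forall>k<n. \<forall>l<n. T k l \<in> BH"
  shows "(\<Sum>k<n. \<Sum>l<n. cinner (if k = i then u else 0) (T k l (if l = j then w else 0))) = cinner u (T i j w)"
proof -
  have inner: "(\<Sum>l<n. cinner (if k = i then u else 0) (T k l (if l = j then w else 0)))
      = (if k = i then cinner u (T i j w) else 0)" if k: "k < n" for k
  proof (cases "k = i")
    case True
    have "(\<Sum>l<n. cinner (if k = i then u else 0) (T k l (if l = j then w else 0)))
        = (\<Sum>l<n. if l = j then cinner u (T i j w) else 0)"
      using True k assms(3) by (intro sum.cong) (auto simp: BH_zero)
    also have "\<dots> = cinner u (T i j w)" using assms(2) by (simp add: sum.delta)
    finally show ?thesis using True by simp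
  qed simp
  have "(\<Sum>k<n. \<Sum>l<n. cinner (if k = i then u else 0) (T k l (if l = j then w else 0)))
      = (\<Sum>k<n. if k = i then cinner u (T i j w) else 0)"
    using inner by (intro sum.cong) auto
  also have "\<dots> = cinner u (T i j w)" using assms(1) by (simp add: sum.delta)
  finally show ?thesis .
qed

lemma matpos_pair:
  fixes i j n :: nat
  assumes mp: "matpos n T" and ij: "i < n" "j < n" and BH: "\<forall>k<n. \<forall>l<n. T k l \<in> BH"
  shows "Im (cinner u (T i i u) + cinner u (T i j w) + cinner w (T j i u) + cinner w (T j j w)) = 0 \<and>
         0 \<le> Re (cinner u (T i i u) + cinner u (T i j w) + cinner w (T j i u) + cinner w (T j j w))"
proof -
  define x where "x = (\<lambda>k. (if k = i then u else 0) + (if k = j then w else 0))"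
  have "(\<Sum>k<n. \<Sum>l<n. cinner (x k) (T k l (x l))) =
     (\<Sum>k<n. \<Sum>l<n. cinner (if k = i then u else 0) (T k l (if l = i then u else 0)) + cinner (if k = i then u else 0) (T k l (if l = j then w else 0)) + cinner (if k = j then w else 0) (T k l (if l = i then u else 0)) + cinner (if k = j then w else 0) (T k l (if l = j then w else 0)))"
  proof (intro sum.cong refl)
    fix k l assume "k \<in> {..<n}" "l \<in> {..<n}"
    then have "T k l \<in> BH" using BH by auto
    then show "cinner (x k) (T k l (x l)) = cinner (if k = i then u else 0) (T k l (if l = i then u else 0)) + cinner (if k = i then u else 0) (T k l (if l = j then w else 0)) + cinner (if k = j then w else 0) (T k l (if l = i then u else 0)) + cinner (if k = j then w else 0) (T k l (if l = j then w else 0))"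
      unfolding x_def by (simp only: BH_add cinner_add_left cinner_add_right add_ac)
  qed
  also have "\<dots> = cinner u (T i i u) + cinner u (T i j w) + cinner w (T j i u) + cinner w (T j j w)"
    by (simp only: sum.distrib delta2[OF ij(1) ij(1) BH] delta2[OF ij BH] delta2[OF ij(2) ij(1) BH] delta2[OF ij(2) ij(2) BH])
  finally have eq: "(\<Sum>k<n. \<Sum>l<n. cinner (x k) (T k l (x l))) = cinner u (T i i u) + cinner u (T i j w) + cinner w (T j i u) + cinner w (T j j w)" .
  from mp have "Im (\<Sum>k<n. \<Sum>l<n. cinner (x k) (T k l (x l))) = 0 \<and> 0 \<le> Re (\<Sum>k<n. \<Sum>l<n. cinner (x k) (T k l (x l)))"
    unfolding matpos_def by (erule_tac x=x in allE) assumption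
  then show ?thesis unfolding eq .
qed

lemma matpos_adj:
  fixes i j n :: nat
  assumes mp: "matpos n T" and ij: "i < n" "j < n" and BH: "\<forall>k<n. \<forall>l<n. T k l \<in> BH"
  shows "adjoint_pair (T j i) (T i j)"
  unfolding adjoint_pair_def
proof (intro allI)
  fix b a
  have BHij: "T i j \<in> BH" "T j i \<in> BH" "T i i \<in> BH" "T j j \<in> BH" using BH ij by auto
  have d1: "Im (cinner a (T i i a)) = 0" using matpos_pair[OF mp ij(1) ij(1) BH, of 0 a] BHij
    by (simp add: BH_zero)
  have d2: "Im (cinner b (T j j b)) = 0" using matpos_pair[OF mp ij(2) ij(2) BH, of 0 b] BHij
    by (simp add: BH_zero)
  have h1: "Im (cinner a (T i j b)) + Im (cinner b (T j i a)) = 0"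
    using matpos_pair[OF mp ij BH, of a b] d1 d2 by simp
  have h2: "Re (cinner b (T j i a)) - Re (cinner a (T i j b)) = 0"
    using matpos_pair[OF mp ij BH, of "\<i> *\<^sub>C a" b] d1 d2 BHij
    by (simp add: BH_scale cinner_scaleC_left cinner_scaleC_right)
  have "cinner b (T j i a) = cnj (cinner a (T i j b))"
    using h1 h2 by (simp add: complex_eq_iff)
  then show "cinner (T i j b) a = cinner b (T j i a)" by (metis cinner_conj)
qed

lemma lin0: assumes "\<And>r::real. 0 \<le> r * a + b" shows "a = 0"
proof (rule ccontr)
  assume "a \<noteq> 0"
  then have "0 \<le> (-(\<bar>b\<bar>+1)/a) * a + b" using assms by blast
  moreover have "(-(\<bar>b\<bar>+1)/a) * a = -(\<bar>b\<bar>+1)" using \<open>a \<noteq> 0\<close> by simp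
  ultimately show False by linarith
qed

lemma CL:
  assumes h: "\<And>s. Im (cnj s * c + s * d + e) = 0 \<and> 0 \<le> Re (cnj s * c + s * d + e)"
  shows "c = 0"
proof -
  have h1: "Re c + Re d = 0"
  proof (rule lin0)
    fix r :: real show "0 \<le> r * (Re c + Re d) + Re e" using h[of "complex_of_real r"]
      by (simp add: algebra_simps)
  qed
  have h2: "Im c - Im d = 0"
  proof (rule lin0)
    fix r :: real show "0 \<le> r * (Im c - Im d) + Re e" using h[of "\<i> * complex_of_real r"]
      by (simp add: algebra_simps)
  qed
  have e0: "Im e = 0" using h[of 0] by simp
  have h3: "Im c + Im d = 0" using h[of 1] e0 by simp
  have h4: "Re d - Re c = 0" using h[of "\<i>"] e0 by simp
  show ?thesis using h1 h2 h3 h4 by (simp add: complex_eq_iff)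
qed

lemma cp_kill:
  fixes \<phi> :: "'a::chilbert opmap"
  assumes cp: "completely_positive \<phi>" and X: "X \<in> BH" "Xs \<in> BH" "adjoint_pair Xs X"
    and phBH: "\<And>S. S \<in> BH \<Longrightarrow> \<phi> S \<in> BH"
    and v0: "cinner v (\<phi> id v) = 0"
  shows "cinner v (\<phi> X w) = 0"
proof -
  define T :: "nat \<Rightarrow> nat \<Rightarrow> 'a \<Rightarrow> 'a" where
    "T = (\<lambda>i j. if i = 0 then (if j = 0 then id else X) else (if j = 0 then Xs else Xs \<circ> X))"
  have TBH: "\<forall>i<2. \<forall>j<2. T i j \<in> BH" using X by (simp add: T_def id_BH comp_BH)
  have adj: "\<And>a b. cinner (X a) b = cinner a (Xs b)" using X(3) by (simp add: adjoint_pair_def)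
  have "matpos 2 T"
    unfolding matpos_def
  proof
    fix x :: "nat \<Rightarrow> 'a"
    have "(\<Sum>i<2. \<Sum>j<2. cinner (x i) (T i j (x j))) = cinner (x 0 + X (x 1)) (x 0 + X (x 1))"
      by (simp add: T_def numeral_2_eq_2 lessThan_Suc cinner_add_left cinner_add_right adj add_ac)
    then show "Im (\<Sum>i<2. \<Sum>j<2. cinner (x i) (T i j (x j))) = 0 \<and> 0 \<le> Re (\<Sum>i<2. \<Sum>j<2. cinner (x i) (T i j (x j)))"
      by (simp add: cinner_self_Im cinner_self_Re_ge)
  qed
  then have mp: "matpos 2 (\<lambda>i j. \<phi> (T i j))"
    using cp[unfolded completely_positive_def, rule_format, of 2 T] TBH by simp
  have BH2: "\<forall>k<2. \<forall>l<2. \<phi> (T k l) \<in> BH" using TBH phBH by simp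
  have phid: "\<phi> id \<in> BH" and phXs: "\<phi> Xs \<in> BH" using phBH id_BH X by auto
  define c where "c = cinner v (\<phi> X w)"
  define d where "d = cinner w (\<phi> Xs v)"
  define e where "e = cinner w (\<phi> (Xs \<circ> X) w)"
  have "Im (cnj s * c + s * d + e) = 0 \<and> 0 \<le> Re (cnj s * c + s * d + e)" for s
  proof -
    have "Im (cinner (s *\<^sub>C v) (\<phi> (T 0 0) (s *\<^sub>C v)) + cinner (s *\<^sub>C v) (\<phi> (T 0 1) w) + cinner w (\<phi> (T 1 0) (s *\<^sub>C v)) + cinner w (\<phi> (T 1 1) w)) = 0 \<and>
      0 \<le> Re (cinner (s *\<^sub>C v) (\<phi> (T 0 0) (s *\<^sub>C v)) + cinner (s *\<^sub>C v) (\<phi> (T 0 1) w) + cinner w (\<phi> (T 1 0) (s *\<^sub>C v)) + cinner w (\<phi> (T 1 1) w))"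
      using matpos_pair[OF mp _ _ BH2, of 0 1] by simp
    moreover have "cinner (s *\<^sub>C v) (\<phi> (T 0 0) (s *\<^sub>C v)) + cinner (s *\<^sub>C v) (\<phi> (T 0 1) w) + cinner w (\<phi> (T 1 0) (s *\<^sub>C v)) + cinner w (\<phi> (T 1 1) w)
       = cnj s * c + s * d + e"
      using phid phXs v0 by (simp add: T_def c_def d_def e_def BH_scale cinner_scaleC_left cinner_scaleC_right)
    ultimately show ?thesis by (metis (no_types))
  qed
  then show ?thesis using CL unfolding c_def by blast
qed

lemma L2a:
  fixes A B :: "'a::chilbert opmap"
  assumes A: "star_endo A" and B: "star_endo B"
    and cp: "completely_positive (\<lambda>S x. A S x - B S x)"
    and X: "X \<in> BH" "Xs \<in> BH" "adjoint_pair Xs X"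
  shows "B id (A X w) = B X w"
proof -
  have phBH: "\<And>S. S \<in> BH \<Longrightarrow> (\<lambda>x. A S x - B S x) \<in> BH"
    using se_BH[OF A] se_BH[OF B] diff_BH by blast
  have key: "cinner (B id u) (A X w) = cinner (B id u) (B X w)" for u
  proof -
    define v where "v = B id u"
    have pv: "B id v = v" unfolding v_def using se_idem[OF B] .
    define z where "z = cinner v (A id v) - cinner v v"
    have z1: "cinner v (A id v - B id v) = z"
      by (simp add: z_def pv cinner_diff_right)
    have zpos: "Im z = 0 \<and> 0 \<le> Re z" using cp_pos1[OF cp, of v] z1 by simp
    have "cinner (v - A id v) (v - A id v) = - z"
      by (simp add: z_def cinner_diff_left cinner_diff_right se_sa[OF A] se_idem[OF A])
    then have "0 \<le> Re (- z)" using cinner_self_Re_ge by metis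
    then have "z = 0" using zpos by (simp add: complex_eq_iff)
    then have "cinner v (A id v - B id v) = 0" using z1 by simp
    then have "cinner v ((\<lambda>S x. A S x - B S x) X w) = 0"
      by (intro cp_kill[OF cp X phBH]) simp
    then show ?thesis unfolding v_def by (simp add: cinner_diff_right)
  qed
  show ?thesis
  proof (rule cinner_ext_right)
    fix u
    have "cinner u (B id (A X w)) = cinner (B id u) (A X w)" using se_sa[OF B] by simp
    also have "\<dots> = cinner (B id u) (B X w)" by (rule key)
    also have "\<dots> = cinner u (B id (B X w))" using se_sa[OF B] by simp
    also have "\<dots> = cinner u (B X w)" using se_left[OF B X(1)] by simp
    finally show "cinner u (B id (A X w)) = cinner u (B X w)" .
  qed
qed

lemma L2b:
  fixes A B :: "'a::chilbert opmap"
  assumes A: "star_endo A" and B: "star_endo B"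
    and cp: "completely_positive (\<lambda>S x. A S x - B S x)"
    and X: "X \<in> BH" "Xs \<in> BH" "adjoint_pair Xs X"
  shows "A X (B id u) = B X u"
proof (rule cinner_ext_left)
  fix w
  have a1: "adjoint_pair (A Xs) (A X)" using se_adj[OF A X(2) X(1) X(3)] .
  have a2: "adjoint_pair (B Xs) (B X)" using se_adj[OF B X(2) X(1) X(3)] .
  have h: "B id (A Xs w) = B Xs w" using L2a[OF A B cp X(2) X(1) adj_sym[OF X(3)]] .
  have "cinner (A X (B id u)) w = cinner (B id u) (A Xs w)" using a1 by (simp add: adjoint_pair_def)
  also have "\<dots> = cinner u (B id (A Xs w))" using se_sa[OF B] by simp
  also have "\<dots> = cinner u (B Xs w)" using h by simp
  also have "\<dots> = cinner (B X u) w" using a2 by (simp add: adjoint_pair_def)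
  finally show "cinner (A X (B id u)) w = cinner (B X u) w" .
qed

lemma proj_order:
  fixes B G :: "'a::chilbert opmap"
  assumes B: "star_endo B" and G: "star_endo G" and le: "ople (G id) (B id)"
  shows "G id (B id w) = G id w" and "B id (G id w) = G id w"
proof -
  have pBH: "B id \<in> BH" and qBH: "G id \<in> BH" using se_BH[OF B id_BH] se_BH[OF G id_BH] by auto
  have qp: "G id (B id w) = G id w" for w
  proof -
    define u where "u = w - B id w"
    have pu: "B id u = 0" unfolding u_def using BH_diff[OF pBH] se_idem[OF B] by simp
    have "0 \<le> Re (cinner u (B id u - G id u))" using le unfolding ople_def posop_def by blast
    moreover have "cinner u (B id u - G id u) = - cinner (G id u) (G id u)"
      using pu by (simp add: cinner_diff_right cinner_minus_right se_sa[OF G] se_idem[OF G])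
    ultimately have "Re (cinner (G id u) (G id u)) \<le> 0" by simp
    then have "norm (G id u) ^ 2 \<le> 0" by (simp add: cinner_self_norm)
    then have "G id u = 0" by simp
    then show ?thesis unfolding u_def using BH_diff[OF qBH] by simp
  qed
  then show "G id (B id w) = G id w" .
  show "B id (G id w) = G id w"
  proof (rule cinner_ext_left)
    fix v
    have "cinner (B id (G id w)) v = cinner (G id w) (B id v)" using se_sa[OF B] by simp
    also have "\<dots> = cinner w (G id (B id v))" using se_sa[OF G] by simp
    also have "\<dots> = cinner w (G id v)" using qp by simp
    also have "\<dots> = cinner (G id w) v" using se_sa[OF G] by simp
    finally show "cinner (B id (G id w)) v = cinner (G id w) v" .
  qed
qed

lemma Kentry:
  fixes A B G :: "'a::chilbert opmap"
  assumes A: "star_endo A" and B: "star_endo B" and G: "star_endo G"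
    and cpB: "completely_positive (\<lambda>S x. A S x - B S x)"
    and cpG: "completely_positive (\<lambda>S x. A S x - G S x)"
    and le: "ople (G id) (B id)"
    and X: "X \<in> BH" "Xs \<in> BH" "adjoint_pair Xs X"
  shows "cinner a (B X b - G X b) =
    cinner (B id a - G id a) (A X (B id b - G id b) - G X (B id b - G id b))"
proof -
  have pBH: "B id \<in> BH" and qBH: "G id \<in> BH" using se_BH[OF B id_BH] se_BH[OF G id_BH] by auto
  have AXBH: "A X \<in> BH" using se_BH[OF A X(1)] .
  have b1: "\<And>u. A X (B id u) = B X u" using L2b[OF A B cpB X] .
  have g1: "\<And>u. A X (G id u) = G X u" using L2b[OF A G cpG X] .
  have g2: "\<And>w. G id (A X w) = G X w" using L2a[OF A G cpG X] .
  have b2: "\<And>w. B id (A X w) = B X w" using L2a[OF A B cpB X] .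
  have qp: "\<And>w. G id (B id w) = G id w" using proj_order(1)[OF B G le] .
  have pq: "\<And>w. B id (G id w) = G id w" using proj_order(2)[OF B G le] .
  have qq: "\<And>w. G id (G id w) = G id w" using se_idem[OF G] .
  define z where "z = B X b - G X b"
  have Gy: "G X (B id b - G id b) = 0"
  proof -
    have "G X (B id b - G id b) = A X (G id (B id b - G id b))" using g1 by simp
    also have "\<dots> = A X 0" using BH_diff[OF qBH] qp qq by simp
    also have "\<dots> = 0" using BH_zero[OF AXBH] .
    finally show ?thesis .
  qed
  have Ay: "A X (B id b - G id b) = z" unfolding z_def using BH_diff[OF AXBH] b1 g1 by simp
  have GX: "G X b = G id (A X b)" using g2 by simp
  have BX: "B X b = B id (A X b)" using b2 by simp
  have pz: "B id z = z" unfolding z_def GX BH_diff[OF pBH] using se_left[OF B X(1)] pq by simp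
  have qz: "G id z = 0" unfolding z_def GX BX BH_diff[OF qBH] using qp qq by simp
  have "cinner (B id a - G id a) (A X (B id b - G id b) - G X (B id b - G id b))
      = cinner (B id a) z - cinner (G id a) z"
    by (simp add: Gy Ay cinner_diff_left)
  also have "\<dots> = cinner a (B id z) - cinner a (G id z)" using se_sa[OF B] se_sa[OF G] by simp
  also have "\<dots> = cinner a z" using pz qz by simp
  finally show ?thesis unfolding z_def by simp
qed

theorem lemma3p1:
  fixes \<alpha> \<beta> \<gamma> :: "real \<Rightarrow> 'a::chilbert opmap"
  assumes "E_semigroup \<alpha>"
    and "\<beta> \<in> Sub \<alpha>"
    and "\<gamma> \<in> Sub \<alpha>"
  shows "sub_le \<gamma> \<beta> \<longleftrightarrow> (\<forall>t\<ge>0. ople (\<gamma> t id) (\<beta> t id))"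
proof
  assume sl: "sub_le \<gamma> \<beta>"
  show "\<forall>t\<ge>0. ople (\<gamma> t id) (\<beta> t id)"
  proof (intro allI impI)
    fix t :: real assume "0 \<le> t"
    then have cp: "completely_positive (\<lambda>S x. \<beta> t S x - \<gamma> t S x)" using sl unfolding sub_le_def by blast
    show "ople (\<gamma> t id) (\<beta> t id)" unfolding ople_def posop_def using cp_pos1[OF cp] by simp
  qed
next
  assume h: "\<forall>t\<ge>0. ople (\<gamma> t id) (\<beta> t id)"
  have Eb: "E_semigroup \<beta>" and Eg: "E_semigroup \<gamma>" and sb: "sub_le \<beta> \<alpha>" and sg: "sub_le \<gamma> \<alpha>"
    using assms(2,3) unfolding Sub_def by auto
  show "sub_le \<gamma> \<beta>" unfolding sub_le_def
  proof (intro allI impI)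
    fix t :: real assume t: "0 \<le> t"
    have A: "star_endo (\<alpha> t)" using assms(1) t unfolding E_semigroup_def by blast
    have B: "star_endo (\<beta> t)" using Eb t unfolding E_semigroup_def by blast
    have G: "star_endo (\<gamma> t)" using Eg t unfolding E_semigroup_def by blast
    have cpB: "completely_positive (\<lambda>S x. \<alpha> t S x - \<beta> t S x)" using sb t unfolding sub_le_def by blast
    have cpG: "completely_positive (\<lambda>S x. \<alpha> t S x - \<gamma> t S x)" using sg t unfolding sub_le_def by blast
    have le: "ople (\<gamma> t id) (\<beta> t id)" using h t by blast
    show "completely_positive (\<lambda>S x. \<beta> t S x - \<gamma> t S x)"
      unfolding completely_positive_def
    proof (intro allI impI)
      fix n and T :: "nat \<Rightarrow> nat \<Rightarrow> 'a \<Rightarrow> 'a"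
      assume TBH: "\<forall>i<n. \<forall>j<n. T i j \<in> BH" and mpT: "matpos n T"
      have cpG': "(\<forall>i<n. \<forall>j<n. T i j \<in> BH) \<longrightarrow> matpos n T \<longrightarrow>
          matpos n (\<lambda>i j. (\<lambda>S x. \<alpha> t S x - \<gamma> t S x) (T i j))"
        using cpG unfolding completely_positive_def by (rule spec[of _ T, OF spec[of _ n]])
      have mpG: "matpos n (\<lambda>i j x. \<alpha> t (T i j) x - \<gamma> t (T i j) x)"
        using cpG' TBH mpT by simp
      show "matpos n (\<lambda>i j. (\<lambda>S x. \<beta> t S x - \<gamma> t S x) (T i j))"
        unfolding matpos_def
      proof
        fix x :: "nat \<Rightarrow> 'a"
        define y where "y = (\<lambda>k. \<beta> t id (x k) - \<gamma> t id (x k))"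
        have eq: "(\<Sum>i<n. \<Sum>j<n. cinner (x i) ((\<lambda>i j. (\<lambda>S x. \<beta> t S x - \<gamma> t S x) (T i j)) i j (x j)))
            = (\<Sum>i<n. \<Sum>j<n. cinner (y i) (\<alpha> t (T i j) (y j) - \<gamma> t (T i j) (y j)))"
        proof (intro sum.cong refl)
          fix i j assume "i \<in> {..<n}" "j \<in> {..<n}"
          then have ij: "i < n" "j < n" by auto
          have X: "T i j \<in> BH" "T j i \<in> BH" "adjoint_pair (T j i) (T i j)"
            using TBH ij matpos_adj[OF mpT ij TBH] by auto
          show "cinner (x i) ((\<lambda>i j. (\<lambda>S x. \<beta> t S x - \<gamma> t S x) (T i j)) i j (x j))
              = cinner (y i) (\<alpha> t (T i j) (y j) - \<gamma> t (T i j) (y j))"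
            unfolding y_def by (simp only: Kentry[OF A B G cpB cpG le X])
        qed
        have "Im (\<Sum>i<n. \<Sum>j<n. cinner (y i) (\<alpha> t (T i j) (y j) - \<gamma> t (T i j) (y j))) = 0 \<and>
            0 \<le> Re (\<Sum>i<n. \<Sum>j<n. cinner (y i) (\<alpha> t (T i j) (y j) - \<gamma> t (T i j) (y j)))"
          using mpG unfolding matpos_def by (erule_tac x=y in allE) assumption
        then show "Im (\<Sum>i<n. \<Sum>j<n. cinner (x i) ((\<lambda>i j. (\<lambda>S x. \<beta> t S x - \<gamma> t S x) (T i j)) i j (x j))) = 0 \<and>
            0 \<le> Re (\<Sum>i<n. \<Sum>j<n. cinner (x i) ((\<lambda>i j. (\<lambda>S x. \<beta> t S x - \<gamma> t S x) (T i j)) i j (x j)))"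
          unfolding eq .
      qed
    qed
  qed
qed

end
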